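(* Let $f=a_nX^n+\dots+a_0\in K[X]$, $a_n\neq 0$, be a regular polynomial. Then the number of roots of $f$ in $K^\ast=K\setminus\{0\}$ equals the sum, over all lower edges $S$ of the Newton polygon of $f$, of the number of roots in $K^\ast$ of the lower binomial of $f$ corresponding to $S$.
   Context: $K$ is a field complete with respect to a non-archimedean discrete valuation $v$, normalized by $v(\pi)=1$ for a uniformizer $\pi$ of the valuation ring $A=\{x\in K: v(x)\geq 0\}$; the residue field $\kappa=A/\pi A$ is finite with $q$ elements and characteristic $p$. For $h=\sum_{i=0}^d c_iX^i\in K[X]$, the Newton polygon of $h$ is the convex hull of the points $(i,v(c_i))$ with $c_i\neq 0$. An edge of a polygon in $\mathbb{R}^2$ is a lower edge if it has an inner normal vector with positive second coordinate. $h$ is regular if for every lower edge $S$ of its Newton polygon, with vertices $(s,v(c_s))$ and $(s',v(c_{s'}))$, $s>s'$: (1) $S$ contains exactly two points of the set $\{(i,v(c_i)) : 0\leq i\leq d,\ c_i\neq 0\}$; (2) $p\nmid (s-s')$. In that case the polynomial $c_{s'}X^{s'}+c_sX^s$ is called the lower binomial of $h$ corresponding to $S$. *)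

theory Defs
  imports "HOL-Computational_Algebra.Polynomial" "HOL-Computational_Algebra.Primes"
begin

text \<open>A normalized discrete valuation v on the field 'k: the value v x is only
  meaningful for x \<noteq> 0 (v 0 plays the role of +infinity and is never used).\<close>
definition discrete_valuation :: "('k::field \<Rightarrow> int) \<Rightarrow> bool" where
  "discrete_valuation v \<longleftrightarrow>
     (\<forall>x y. x \<noteq> 0 \<longrightarrow> y \<noteq> 0 \<longrightarrow> v (x * y) = v x + v y) \<and>
     (\<forall>x y. x \<noteq> 0 \<longrightarrow> y \<noteq> 0 \<longrightarrow> x + y \<noteq> 0 \<longrightarrow> v (x + y) \<ge> min (v x) (v y)) \<and>
     (\<exists>\<pi>. \<pi> \<noteq> 0 \<and> v \<pi> = 1)"

text \<open>Completeness w.r.t. the valuation topology (x close to y iff x = y or v(x-y) large).\<close>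
definition valuation_complete :: "('k::field \<Rightarrow> int) \<Rightarrow> bool" where
  "valuation_complete v \<longleftrightarrow>
     (\<forall>X :: nat \<Rightarrow> 'k.
        (\<forall>N::int. \<exists>M. \<forall>m\<ge>M. \<forall>n\<ge>M. X m = X n \<or> v (X m - X n) \<ge> N) \<longrightarrow>
        (\<exists>L. \<forall>N::int. \<exists>M. \<forall>n\<ge>M. X n = L \<or> v (X n - L) \<ge> N))"

definition val_ring :: "('k::field \<Rightarrow> int) \<Rightarrow> 'k set" where
  "val_ring v = {x. x = 0 \<or> 0 \<le> v x}"

definition max_ideal :: "('k::field \<Rightarrow> int) \<Rightarrow> 'k set" where
  "max_ideal v = {x. x = 0 \<or> 1 \<le> v x}"

definition residue_rel :: "('k::field \<Rightarrow> int) \<Rightarrow> ('k \<times> 'k) set" where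
  "residue_rel v = {(x, y). x \<in> val_ring v \<and> y \<in> val_ring v \<and> x - y \<in> max_ideal v}"

definition residue_field :: "('k::field \<Rightarrow> int) \<Rightarrow> 'k set set" where
  "residue_field v = val_ring v // residue_rel v"

text \<open>Lower edge of the Newton polygon with vertices (s', v c_s') and (s, v c_s), s' < s:
  all points (i, v c_i), c_i \<noteq> 0, lie on or above the line through the two vertices,
  and the points on that line have abscissa in [s', s].\<close>
definition lower_edge :: "('k::field \<Rightarrow> int) \<Rightarrow> 'k poly \<Rightarrow> nat \<Rightarrow> nat \<Rightarrow> bool" where
  "lower_edge v f s' s \<longleftrightarrow> s' < s \<and> coeff f s' \<noteq> 0 \<and> coeff f s \<noteq> 0 \<and>
     (\<forall>i. coeff f i \<noteq> 0 \<longrightarrow>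
        (v (coeff f i) - v (coeff f s')) * (int s - int s')
          \<ge> (v (coeff f s) - v (coeff f s')) * (int i - int s')) \<and>
     (\<forall>i. coeff f i \<noteq> 0 \<longrightarrow>
        (v (coeff f i) - v (coeff f s')) * (int s - int s')
          = (v (coeff f s) - v (coeff f s')) * (int i - int s') \<longrightarrow> s' \<le> i \<and> i \<le> s)"

definition regular :: "('k::field \<Rightarrow> int) \<Rightarrow> nat \<Rightarrow> 'k poly \<Rightarrow> bool" where
  "regular v p f \<longleftrightarrow> (\<forall>s' s. lower_edge v f s' s \<longrightarrow>
     (\<forall>i. s' < i \<and> i < s \<and> coeff f i \<noteq> 0 \<longrightarrow>
        (v (coeff f i) - v (coeff f s')) * (int s - int s')
          \<noteq> (v (coeff f s) - v (coeff f s')) * (int i - int s')) \<and>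
     \<not> p dvd (s - s'))"

definition lower_binomial :: "'k::field poly \<Rightarrow> nat \<Rightarrow> nat \<Rightarrow> 'k poly" where
  "lower_binomial f s' s = monom (coeff f s') s' + monom (coeff f s) s"

end

theory Submission
  imports Defs
begin

definition vI :: "('k::field \<Rightarrow> int) \<Rightarrow> int \<Rightarrow> 'k set" where
  "vI v N = {x. x = 0 \<or> N \<le> v x}"

locale dval = fixes v :: "'k::field \<Rightarrow> int" assumes dv: "discrete_valuation v"
begin

lemma vmult: "x \<noteq> 0 \<Longrightarrow> y \<noteq> 0 \<Longrightarrow> v (x * y) = v x + v y"
  using dv unfolding discrete_valuation_def by blast

lemma vadd: "x \<noteq> 0 \<Longrightarrow> y \<noteq> 0 \<Longrightarrow> x + y \<noteq> 0 \<Longrightarrow> v (x + y) \<ge> min (v x) (v y)"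
  using dv unfolding discrete_valuation_def by blast

lemma v1: "v 1 = 0"
  using vmult[of 1 1] by simp

lemma vm1: "v (-1) = 0"
  using vmult[of "-1" "-1"] v1 by simp

lemma vneg: "v (- x) = v x"
proof (cases "x = 0")
  case False
  have "v (- x) = v (-1 * x)" by simp
  also have "\<dots> = v x" using vmult[of "-1" x] False vm1 by simp
  finally show ?thesis .
qed simp

lemma vinv: "x \<noteq> 0 \<Longrightarrow> v (inverse x) = - v x"
  using vmult[of x "inverse x"] v1 by simp

lemma vdiv: "x \<noteq> 0 \<Longrightarrow> y \<noteq> 0 \<Longrightarrow> v (x / y) = v x - v y"
  using vmult[of x "inverse y"] vinv[of y] by (simp add: divide_inverse)

lemma vpow: "x \<noteq> 0 \<Longrightarrow> v (x ^ n) = int n * v x"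
  by (induction n) (auto simp: v1 vmult algebra_simps)

lemma vI_0[simp]: "0 \<in> vI v N" by (simp add: vI_def)

lemma vI_add: "x \<in> vI v N \<Longrightarrow> y \<in> vI v N \<Longrightarrow> x + y \<in> vI v N"
proof -
  assume a: "x \<in> vI v N" "y \<in> vI v N"
  show ?thesis
  proof (cases "x = 0 \<or> y = 0 \<or> x + y = 0")
    case True then show ?thesis using a by auto
  next
    case False
    then have "v (x + y) \<ge> min (v x) (v y)" using vadd[of x y] by auto
    then show ?thesis using a False unfolding vI_def by auto
  qed
qed

lemma vI_neg: "x \<in> vI v N \<Longrightarrow> - x \<in> vI v N"
  unfolding vI_def using vneg[of x] by auto

lemma vI_diff: "x \<in> vI v N \<Longrightarrow> y \<in> vI v N \<Longrightarrow> x - y \<in> vI v N"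
  unfolding diff_conv_add_uminus by (rule vI_add, assumption, rule vI_neg)

lemma vI_mult: "x \<in> vI v M \<Longrightarrow> y \<in> vI v N \<Longrightarrow> x * y \<in> vI v (M + N)"
  unfolding vI_def by (cases "x = 0"; cases "y = 0") (auto simp: vmult)

lemma vI_mono: "x \<in> vI v N \<Longrightarrow> M \<le> N \<Longrightarrow> x \<in> vI v M"
  unfolding vI_def by auto

lemma vI_mult0: "x \<in> vI v 0 \<Longrightarrow> y \<in> vI v N \<Longrightarrow> x * y \<in> vI v N"
  using vI_mult[of x 0 y N] by simp

lemma vI_mult0': "x \<in> vI v N \<Longrightarrow> y \<in> vI v 0 \<Longrightarrow> x * y \<in> vI v N"
  using vI_mult[of x N y 0] by simp

lemma vI_1: "1 \<in> vI v 0" by (simp add: vI_def v1)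

lemma vI_pow: "x \<in> vI v 0 \<Longrightarrow> x ^ n \<in> vI v 0"
  by (induction n) (auto simp: vI_1 vI_mult0)

lemma vI_of_nat: "of_nat n \<in> vI v 0"
  by (induction n) (auto simp: vI_1 vI_add)

lemma vI_of_int: "of_int n \<in> vI v 0"
proof (cases "n \<ge> 0")
  case True then show ?thesis using vI_of_nat[of "nat n"] by simp
next
  case False then show ?thesis using vI_neg[OF vI_of_nat[of "nat (-n)"]] by simp
qed

lemma vI_sum: "(\<And>i. i \<in> S \<Longrightarrow> f i \<in> vI v N) \<Longrightarrow> sum f S \<in> vI v N"
  by (induction S rule: infinite_finite_induct) (auto intro: vI_add)

lemma vI_all: "(\<And>N. x \<in> vI v N) \<Longrightarrow> x = 0"
proof (rule ccontr)
  assume a: "\<And>N. x \<in> vI v N" "x \<noteq> 0"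
  from a(1)[of "v x + 1"] a(2) show False by (simp add: vI_def)
qed

lemma v_add_small:
  assumes "x \<noteq> 0" "v x < N" "e \<in> vI v N"
  shows "x + e \<noteq> 0 \<and> v (x + e) = v x"
proof (cases "e = 0")
  case True then show ?thesis using assms by simp
next
  case False
  then have ve: "v e \<ge> N" using assms vI_def by auto
  have ne: "x + e \<noteq> 0"
  proof
    assume "x + e = 0" then have "x = - e" by (simp add: add_eq_0_iff)
    then have "v x = v e" by (simp add: vneg)
    then show False using ve assms by simp
  qed
  have "v (x + e) \<ge> v x" using vadd[OF assms(1) False ne] ve assms by simp
  moreover have "v x \<ge> min (v (x + e)) (v (-e))"
    using vadd[OF ne, of "-e"] False assms(1) by simp
  ultimately show ?thesis using ne ve assms vneg[of e] by auto
qed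

lemma unit_add_small:
  assumes "x \<noteq> 0" "v x = 0" "e \<in> vI v 1"
  shows "x + e \<noteq> 0 \<and> v (x + e) = 0"
  using v_add_small[OF assms(1) _ assms(3)] assms by simp

end

context dval begin

lemma poly_vI:
  assumes "\<And>i. coeff h i \<in> vI v N" "x \<in> vI v 0"
  shows "poly h x \<in> vI v N"
  using assms(1)
proof (induction h)
  case 0 then show ?case by simp
next
  case (pCons a h)
  have a: "a \<in> vI v N" using pCons.prems[of 0] by simp
  have h: "coeff h i \<in> vI v N" for i using pCons.prems[of "Suc i"] by simp
  have "x * poly h x \<in> vI v N" using vI_mult0[OF assms(2) pCons.IH[OF h]] .
  then show ?case using a by (simp add: vI_add)
qed

lemma pderiv_vI:
  assumes "\<And>i. coeff h i \<in> vI v N"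
  shows "coeff (pderiv h) i \<in> vI v N"
  unfolding coeff_pderiv using vI_mult0[OF vI_of_nat assms] .

lemma poly_diff_vI:
  assumes "\<And>i. coeff h i \<in> vI v 0" "x \<in> vI v 0" "y \<in> vI v 0"
  shows "\<exists>q \<in> vI v 0. poly h x - poly h y = (x - y) * q"
  using assms(1)
proof (induction h)
  case 0 then show ?case by (intro bexI[of _ 0]) auto
next
  case (pCons a h)
  have h: "coeff h i \<in> vI v 0" for i using pCons.prems[of "Suc i"] by simp
  obtain q where q: "q \<in> vI v 0" "poly h x - poly h y = (x - y) * q" using pCons.IH[OF h] by blast
  have e: "poly h x = poly h y + (x - y) * q" using q(2) by (simp add: algebra_simps)
  have "poly (pCons a h) x - poly (pCons a h) y = (x - y) * (poly h x + y * q)"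
    unfolding poly_pCons e by algebra
  moreover have "poly h x + y * q \<in> vI v 0"
    using vI_add[OF poly_vI[OF h assms(2)] vI_mult0[OF assms(3) q(1)]] .
  ultimately show ?case by blast
qed

lemma poly_diff_vI_N:
  assumes "\<And>i. coeff h i \<in> vI v 0" "x \<in> vI v 0" "y \<in> vI v 0" "x - y \<in> vI v N"
  shows "poly h x - poly h y \<in> vI v N"
  using poly_diff_vI[OF assms(1-3)] vI_mult0'[OF assms(4)] by auto

lemma taylor_vI:
  assumes "\<And>i. coeff h i \<in> vI v 0" "x \<in> vI v 0" "t \<in> vI v 0"
  shows "\<exists>Q \<in> vI v 0. poly h (x + t) = poly h x + t * poly (pderiv h) x + t^2 * Q"
  using assms(1)
proof (induction h)
  case 0 then show ?case by (intro bexI[of _ 0]) auto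
next
  case (pCons a h)
  have h: "coeff h i \<in> vI v 0" for i using pCons.prems[of "Suc i"] by simp
  obtain Q where Q: "Q \<in> vI v 0" "poly h (x + t) = poly h x + t * poly (pderiv h) x + t^2 * Q"
    using pCons.IH[OF h] by blast
  have xt: "x + t \<in> vI v 0" using vI_add[OF assms(2,3)] .
  obtain q where q: "q \<in> vI v 0" "poly h (x + t) - poly h x = (x + t - x) * q"
    using poly_diff_vI[OF h xt assms(2)] by blast
  have q': "poly h (x + t) = poly h x + t * q" using q(2) by (simp add: algebra_simps)
  have "poly (pCons a h) (x + t) = a + x * poly h (x + t) + t * poly h (x + t)"
    by (simp add: algebra_simps)
  also have "\<dots> = a + x * (poly h x + t * poly (pderiv h) x + t^2 * Q) + t * (poly h x + t * q)"
    using Q(2) q' by simp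
  also have "\<dots> = poly (pCons a h) x + t * poly (pderiv (pCons a h)) x + t^2 * (x * Q + q)"
    by (simp add: pderiv_pCons algebra_simps power2_eq_square)
  finally have "poly (pCons a h) (x + t) = poly (pCons a h) x + t * poly (pderiv (pCons a h)) x + t^2 * (x * Q + q)" .
  moreover have "x * Q + q \<in> vI v 0" using vI_add[OF vI_mult0[OF assms(2) Q(1)] q(1)] .
  ultimately show ?case by blast
qed

lemma unit_vI0: "x \<noteq> 0 \<Longrightarrow> v x = 0 \<Longrightarrow> x \<in> vI v 0"
  by (simp add: vI_def)

lemma inv_unit: "x \<noteq> 0 \<Longrightarrow> v x = 0 \<Longrightarrow> inverse x \<noteq> 0 \<and> v (inverse x) = 0"
  using vinv by simp

lemma hensel_unique:
  assumes h: "\<And>i. coeff h i \<in> vI v 0" and u: "u1 \<in> vI v 0" "u2 \<in> vI v 0"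
    and r: "poly h u1 = 0" "poly h u2 = 0" and d: "u2 - u1 \<in> vI v 1"
    and c: "poly (pderiv h) u1 \<noteq> 0" "v (poly (pderiv h) u1) = 0"
  shows "u1 = u2"
proof -
  define t where "t = u2 - u1"
  have t: "t \<in> vI v 0" using vI_mono[OF d] t_def by simp
  obtain Q where Q: "Q \<in> vI v 0" "poly h (u1 + t) = poly h u1 + t * poly (pderiv h) u1 + t^2 * Q"
    using taylor_vI[OF h u(1) t] by blast
  have "u1 + t = u2" by (simp add: t_def)
  then have "0 = t * (poly (pderiv h) u1 + t * Q)" using Q(2) r by (simp add: algebra_simps power2_eq_square)
  moreover have "t * Q \<in> vI v 1" using vI_mult0'[OF _ Q(1)] d t_def by simp
  then have "poly (pderiv h) u1 + t * Q \<noteq> 0" using unit_add_small[OF c] by blast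
  ultimately have "t = 0" by simp
  then show ?thesis by (simp add: t_def)
qed

lemma hensel_exists:
  assumes comp: "valuation_complete v"
    and h: "\<And>i. coeff h i \<in> vI v 0" and r: "r \<in> vI v 0" "poly h r \<in> vI v 1"
    and c: "poly (pderiv h) r \<noteq> 0" "v (poly (pderiv h) r) = 0"
  shows "\<exists>u. poly h u = 0 \<and> u - r \<in> vI v 1"
proof -
  define c where "c = poly (pderiv h) r"
  have c0: "c \<noteq> 0" "v c = 0" using c c_def by auto
  have ci: "inverse c \<in> vI v 0" using inv_unit[OF c0] unit_vI0 by blast
  have hd: "\<And>i. coeff (pderiv h) i \<in> vI v 0" using pderiv_vI[OF h] .
  define X where "X = rec_nat r (\<lambda>n x. x - poly h x / c)"
  have X0: "X 0 = r" and XS: "\<And>n. X (Suc n) = X n - poly h (X n) / c" by (simp_all add: X_def)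
  have inv: "X n \<in> vI v 0 \<and> X n - r \<in> vI v 1 \<and> poly h (X n) \<in> vI v (int n + 1)" for n
  proof (induction n)
    case 0 then show ?case using r X0 by simp
  next
    case (Suc n)
    have xn: "X n \<in> vI v 0" and xr: "X n - r \<in> vI v 1" and hx: "poly h (X n) \<in> vI v (int n + 1)"
      using Suc by auto
    define t where "t = - poly h (X n) / c"
    have t: "t \<in> vI v (int n + 1)"
      unfolding t_def divide_inverse using vI_mult0'[OF vI_neg[OF hx] ci] by simp
    have t0: "t \<in> vI v 0" using vI_mono[OF t] by simp
    have t1: "t \<in> vI v 1" using vI_mono[OF t] by simp
    have XSt: "X (Suc n) = X n + t" using XS by (simp add: t_def)
    have a1: "X (Suc n) \<in> vI v 0" using XSt vI_add[OF xn t0] by simp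
    have a2: "X (Suc n) - r \<in> vI v 1" using XSt vI_add[OF xr t1] by (simp add: algebra_simps)
    obtain Q where Q: "Q \<in> vI v 0" "poly h (X n + t) = poly h (X n) + t * poly (pderiv h) (X n) + t^2 * Q"
      using taylor_vI[OF h xn t0] by blast
    have dd: "c - poly (pderiv h) (X n) \<in> vI v 1"
      using poly_diff_vI_N[OF hd r(1) xn, of 1] vI_neg[OF xr] unfolding c_def by (simp add: algebra_simps)
    have e1: "poly h (X n) + t * poly (pderiv h) (X n) = poly h (X n) * ((c - poly (pderiv h) (X n)) * inverse c)"
      using c0 by (simp add: t_def field_simps)
    have "poly h (X n) * ((c - poly (pderiv h) (X n)) * inverse c) \<in> vI v (int n + 1 + 1)"
      using vI_mult[OF hx vI_mult0'[OF dd ci]] .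
    moreover have "t^2 * Q \<in> vI v (int n + 1 + 1)"
    proof -
      have "t^2 \<in> vI v ((int n + 1) + (int n + 1))" using vI_mult[OF t t] by (simp add: power2_eq_square)
      then have "t^2 \<in> vI v (int n + 1 + 1)" by (rule vI_mono) simp
      then show ?thesis using vI_mult0'[OF _ Q(1)] by blast
    qed
    ultimately have "poly h (X (Suc n)) \<in> vI v (int (Suc n) + 1)"
      using XSt Q(2) e1 vI_add by (metis add.commute of_nat_Suc)
    then show ?case using a1 a2 by blast
  qed
  have stepX: "X (Suc n) - X n \<in> vI v (int n + 1)" for n
    using inv[of n] XS[of n] vI_mult0'[OF vI_neg[OF conjunct2[OF conjunct2[OF inv[of n]]]] ci]
    by (simp add: divide_inverse)
  have cauchy: "X m - X n \<in> vI v (int n + 1)" if "n \<le> m" for m n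
    using that
  proof (induction m rule: dec_induct)
    case base then show ?case by simp
  next
    case (step k)
    have "X (Suc k) - X k \<in> vI v (int n + 1)" using vI_mono[OF stepX[of k]] step(1) by simp
    have "X (Suc k) - X n = (X (Suc k) - X k) + (X k - X n)" by simp
    then show ?case using vI_add[OF \<open>X (Suc k) - X k \<in> vI v (int n + 1)\<close> step(3)] by simp
  qed
  have cauchy2: "X m - X n \<in> vI v N" if "m \<ge> nat N" "n \<ge> nat N" for m n N
  proof (cases "n \<le> m")
    case True then show ?thesis using vI_mono[OF cauchy[OF True]] that by simp
  next
    case False then have "X n - X m \<in> vI v N" using vI_mono[OF cauchy[of m n]] that by simp
    then show ?thesis using vI_neg by fastforce
  qed
  have "\<forall>N::int. \<exists>M. \<forall>m\<ge>M. \<forall>n\<ge>M. X m = X n \<or> v (X m - X n) \<ge> N"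
  proof
    fix N :: int
    show "\<exists>M. \<forall>m\<ge>M. \<forall>n\<ge>M. X m = X n \<or> v (X m - X n) \<ge> N"
      using cauchy2[of N] unfolding vI_def by auto
  qed
  then obtain L where L: "\<forall>N::int. \<exists>M. \<forall>n\<ge>M. X n = L \<or> v (X n - L) \<ge> N"
    using comp unfolding valuation_complete_def by blast
  have Lc: "\<exists>M. \<forall>n\<ge>M. X n - L \<in> vI v N" for N using L unfolding vI_def by auto
  obtain M1 where M1: "\<And>n. n \<ge> M1 \<Longrightarrow> X n - L \<in> vI v 1" using Lc[of 1] by blast
  have "L - r \<in> vI v 1"
    using vI_diff[OF conjunct1[OF conjunct2[OF inv[of M1]]] M1[of M1]] by simp
  moreover have "poly h L = 0"
  proof (rule vI_all)
    fix N
    obtain M where M: "\<And>n. n \<ge> M \<Longrightarrow> X n - L \<in> vI v N" using Lc[of N] by blast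
    define n where "n = max M (nat N)"
    have xl: "X n - L \<in> vI v N" using M n_def by simp
    have L0: "L \<in> vI v 0"
      using vI_diff[OF conjunct1[OF inv[of M1]] vI_mono[OF M1[of M1]]] by simp
    have "poly h (X n) - poly h L \<in> vI v N" using poly_diff_vI_N[OF h conjunct1[OF inv[of n]] L0 xl] .
    moreover have "poly h (X n) \<in> vI v N"
      using vI_mono[OF conjunct2[OF conjunct2[OF inv[of n]]]] n_def by simp
    ultimately show "poly h L \<in> vI v N" using vI_diff by fastforce
  qed
  ultimately show ?thesis by blast
qed

end

context dval begin

definition U :: "'k poly \<Rightarrow> 'k set" where
  "U h = {u. u \<noteq> 0 \<and> v u = 0 \<and> poly h u = 0}"

lemma count_le:
  assumes comp: "valuation_complete v"
    and h1: "\<And>i. coeff h1 i \<in> vI v 0" and h2: "\<And>i. coeff h2 i \<in> vI v 0"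
    and df: "\<And>i. coeff h1 i - coeff h2 i \<in> vI v 1" and nz: "h2 \<noteq> 0"
    and der: "\<And>y. y \<noteq> 0 \<Longrightarrow> v y = 0 \<Longrightarrow> poly h1 y = 0 \<Longrightarrow>
                 poly (pderiv h1) y \<noteq> 0 \<and> v (poly (pderiv h1) y) = 0"
  shows "card (U h1) \<le> card (U h2)"
proof -
  have dfc: "coeff (h1 - h2) i \<in> vI v 1" for i using df by simp
  have ex: "\<exists>u. u \<in> U h2 \<and> u - y \<in> vI v 1" if y: "y \<in> U h1" for y
  proof -
    have y0: "y \<noteq> 0" "v y = 0" "poly h1 y = 0" using y by (auto simp: U_def)
    have yA: "y \<in> vI v 0" using unit_vI0 y0 by blast
    have "poly (h1 - h2) y \<in> vI v 1" using poly_vI[OF dfc yA] .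
    then have "- poly (h1 - h2) y \<in> vI v 1" by (rule vI_neg)
    then have p2: "poly h2 y \<in> vI v 1" using y0(3) by simp
    have "poly (pderiv (h1 - h2)) y \<in> vI v 1" using poly_vI[OF pderiv_vI[OF dfc] yA] .
    then have n1: "- poly (pderiv (h1 - h2)) y \<in> vI v 1" by (rule vI_neg)
    have "poly (pderiv h1) y + - poly (pderiv (h1 - h2)) y \<noteq> 0 \<and>
               v (poly (pderiv h1) y + - poly (pderiv (h1 - h2)) y) = 0"
      by (rule unit_add_small[OF conjunct1[OF der[OF y0]] conjunct2[OF der[OF y0]] n1])
    then have d2: "poly (pderiv h2) y \<noteq> 0" "v (poly (pderiv h2) y) = 0"
      by (simp_all add: pderiv_diff)
    obtain u where u: "poly h2 u = 0" "u - y \<in> vI v 1"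
      using hensel_exists[OF comp h2 yA p2 d2] by blast
    have "y + (u - y) \<noteq> 0 \<and> v (y + (u - y)) = 0" using unit_add_small[OF y0(1,2) u(2)] .
    then have "u \<in> U h2" using u(1) by (simp add: U_def)
    then show ?thesis using u(2) by blast
  qed
  define phi where "phi y = (SOME u. u \<in> U h2 \<and> u - y \<in> vI v 1)" for y
  have phi: "phi y \<in> U h2 \<and> phi y - y \<in> vI v 1" if "y \<in> U h1" for y
    unfolding phi_def using someI_ex[OF ex[OF that]] .
  have inj: "inj_on phi (U h1)"
  proof (rule inj_onI)
    fix y1 y2 assume y: "y1 \<in> U h1" "y2 \<in> U h1" "phi y1 = phi y2"
    have a1: "y1 \<noteq> 0" "v y1 = 0" "poly h1 y1 = 0" using y by (auto simp: U_def)
    have a2: "y2 \<noteq> 0" "v y2 = 0" "poly h1 y2 = 0" using y by (auto simp: U_def)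
    have "(phi y1 - y1) - (phi y2 - y2) \<in> vI v 1"
      by (rule vI_diff; rule conjunct2[OF phi]; rule y)
    then have "y2 - y1 \<in> vI v 1" using y(3) by simp
    then show "y1 = y2"
      by (rule hensel_unique[OF h1 unit_vI0[OF a1(1,2)] unit_vI0[OF a2(1,2)] a1(3) a2(3) _ conjunct1[OF der[OF a1]] conjunct2[OF der[OF a1]]])
  qed
  have fin: "finite (U h2)" using poly_roots_finite[OF nz] by (rule rev_finite_subset) (auto simp: U_def)
  have "phi ` U h1 \<subseteq> U h2" using phi by auto
  then show ?thesis using card_inj_on_le[OF inj _ fin] by simp
qed

lemma count_eq:
  assumes comp: "valuation_complete v"
    and h1: "\<And>i. coeff h1 i \<in> vI v 0" and h2: "\<And>i. coeff h2 i \<in> vI v 0"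
    and df: "\<And>i. coeff h1 i - coeff h2 i \<in> vI v 1" and nz: "h1 \<noteq> 0" "h2 \<noteq> 0"
    and der1: "\<And>y. y \<noteq> 0 \<Longrightarrow> v y = 0 \<Longrightarrow> poly h1 y = 0 \<Longrightarrow>
                 poly (pderiv h1) y \<noteq> 0 \<and> v (poly (pderiv h1) y) = 0"
    and der2: "\<And>y. y \<noteq> 0 \<Longrightarrow> v y = 0 \<Longrightarrow> poly h2 y = 0 \<Longrightarrow>
                 poly (pderiv h2) y \<noteq> 0 \<and> v (poly (pderiv h2) y) = 0"
  shows "card (U h1) = card (U h2)"
proof -
  have df2: "coeff h2 i - coeff h1 i \<in> vI v 1" for i
  proof -
    have "- (coeff h1 i - coeff h2 i) \<in> vI v 1" by (rule vI_neg[OF df[of i]])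
    then show ?thesis by (simp only: minus_diff_eq)
  qed
  show ?thesis by (rule le_antisym[OF count_le[OF comp h1 h2 df nz(2) der1] count_le[OF comp h2 h1 df2 nz(1) der2]])
qed

end

context dval begin

lemma of_nat_unit:
  assumes pr: "prime p" and pm: "of_nat p \<in> vI v 1" and nd: "\<not> p dvd d"
  shows "of_nat d \<noteq> (0::'k) \<and> v (of_nat d) = 0"
proof -
  have "coprime p d" using prime_imp_coprime[OF pr nd] .
  then have g: "gcd (int p) (int d) = 1" by simp
  obtain u w where uw: "u * int p + w * int d = gcd (int p) (int d)" using bezout_int by blast
  have "(of_int (u * int p + w * int d) :: 'k) = 1" using uw g by simp
  then have e: "of_int u * of_nat p + of_int w * of_nat d = (1::'k)" by simp
  have nI: "(of_nat d :: 'k) \<notin> vI v 1"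
  proof
    assume a: "(of_nat d :: 'k) \<in> vI v 1"
    have "of_int u * of_nat p + of_int w * of_nat d \<in> vI v 1"
      by (rule vI_add[OF vI_mult0[OF vI_of_int pm] vI_mult0[OF vI_of_int a]])
    then have "(1::'k) \<in> vI v 1" using e by simp
    then show False using v1 by (simp add: vI_def)
  qed
  have "(of_nat d :: 'k) \<in> vI v 0" by (rule vI_of_nat)
  then show ?thesis using nI by (auto simp: vI_def)
qed

lemma unit_mult: "x \<noteq> 0 \<Longrightarrow> v x = 0 \<Longrightarrow> y \<noteq> 0 \<Longrightarrow> v y = 0 \<Longrightarrow> x * y \<noteq> 0 \<and> v (x * y) = 0"
  using vmult by simp

lemma binom_deriv:
  assumes s: "s' < s" and al: "\<alpha> \<noteq> 0" "v \<alpha> = 0" and du: "of_nat (s - s') \<noteq> (0::'k)" "v (of_nat (s - s') :: 'k) = 0"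
    and y: "y \<noteq> 0" "v y = 0" and hb: "poly (monom 1 s' + monom \<alpha> s) y \<in> vI v 1"
  shows "poly (pderiv (monom 1 s' + monom \<alpha> s)) y \<noteq> 0 \<and> v (poly (pderiv (monom 1 s' + monom \<alpha> s)) y) = 0"
proof -
  define P where "P = poly (pderiv (monom 1 s' + monom \<alpha> s)) y"
  have P: "P = of_nat s' * y ^ (s' - 1) + of_nat s * \<alpha> * y ^ (s - 1)"
    by (simp add: P_def pderiv_add pderiv_monom poly_monom)
  have b: "poly (monom 1 s' + monom \<alpha> s) y = y ^ s' + \<alpha> * y ^ s" by (simp add: poly_monom)
  have ys: "y * y ^ (s - 1) = y ^ s" using s by (cases s) auto
  have ys': "of_nat s' * (y * y ^ (s' - 1)) = of_nat s' * y ^ s'" by (cases s') auto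
  have "y * P = of_nat s' * (y * y ^ (s' - 1)) + of_nat s * \<alpha> * (y * y ^ (s - 1))"
    unfolding P by (simp add: algebra_simps)
  also have "\<dots> = of_nat s' * y ^ s' + of_nat s * \<alpha> * y ^ s" using ys ys' by simp
  also have "\<dots> = of_nat (s - s') * \<alpha> * y ^ s + of_nat s' * (y ^ s' + \<alpha> * y ^ s)"
  proof -
    have "(of_nat s :: 'k) = of_nat (s - s') + of_nat s'" using s by (simp add: of_nat_diff)
    then show ?thesis by (simp add: algebra_simps)
  qed
  finally have yP: "y * P = of_nat (s - s') * \<alpha> * y ^ s + of_nat s' * (y ^ s' + \<alpha> * y ^ s)" .
  have u1: "of_nat (s - s') * \<alpha> * y ^ s \<noteq> 0 \<and> v (of_nat (s - s') * \<alpha> * y ^ s) = 0"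
  proof -
    have "y ^ s \<noteq> 0" "v (y ^ s) = 0" using y vpow by auto
    then show ?thesis using unit_mult[OF conjunct1[OF unit_mult[OF du al]] conjunct2[OF unit_mult[OF du al]]] by blast
  qed
  have e: "of_nat s' * (y ^ s' + \<alpha> * y ^ s) \<in> vI v 1"
    using vI_mult0[OF vI_of_nat hb[unfolded b]] .
  have "y * P \<noteq> 0 \<and> v (y * P) = 0" unfolding yP using unit_add_small[OF conjunct1[OF u1] conjunct2[OF u1] e] .
  then have "P \<noteq> 0" "v y + v P = 0" using vmult[of y P] y by auto
  then show ?thesis using y P_def by simp
qed

end

context dval begin

lemma transfer_card:
  assumes z: "z \<noteq> 0" and K: "K \<noteq> 0" and hg: "\<And>u. poly h (z * u) = K * poly g u"
  shows "card {x. x \<noteq> 0 \<and> poly h x = 0 \<and> v x = v z} = card (U g)"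
proof -
  have eq: "{x. x \<noteq> 0 \<and> poly h x = 0 \<and> v x = v z} = (\<lambda>u. z * u) ` U g"
  proof (rule set_eqI, rule iffI)
    fix x assume x: "x \<in> {x. x \<noteq> 0 \<and> poly h x = 0 \<and> v x = v z}"
    define u where "u = x / z"
    have xu: "x = z * u" using z u_def by simp
    have u0: "u \<noteq> 0" using x z u_def by simp
    have "v u = 0" using x z u_def vdiv[of x z] by simp
    moreover have "poly g u = 0" using hg[of u] xu x K by simp
    ultimately have "u \<in> U g" using u0 by (simp add: U_def)
    then show "x \<in> (\<lambda>u. z * u) ` U g" using xu by blast
  next
    fix x assume "x \<in> (\<lambda>u. z * u) ` U g"
    then obtain u where u: "u \<in> U g" "x = z * u" by blast
    have u0: "u \<noteq> 0" "v u = 0" "poly g u = 0" using u(1) by (auto simp: U_def)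
    show "x \<in> {x. x \<noteq> 0 \<and> poly h x = 0 \<and> v x = v z}"
      using u(2) u0 z hg[of u] vmult[of z u] by simp
  qed
  have "inj_on (\<lambda>u. z * u) (U g)" using z by (auto intro: inj_onI)
  then show ?thesis unfolding eq by (rule card_image)
qed

lemma edge_line:
  assumes le: "lower_edge v f s' s" and z: "(int s - int s') * v z = v (coeff f s') - v (coeff f s)"
  shows "(v (coeff f i) - v (coeff f s')) * (int s - int s') - (v (coeff f s) - v (coeff f s')) * (int i - int s')
     = (int s - int s') * ((v (coeff f i) + int i * v z) - (v (coeff f s') + int s' * v z))"
  using z by algebra

lemma edge_ge:
  assumes le: "lower_edge v f s' s" and z: "(int s - int s') * v z = v (coeff f s') - v (coeff f s)"
    and c: "coeff f i \<noteq> 0"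
  shows "v (coeff f i) + int i * v z \<ge> v (coeff f s') + int s' * v z"
proof -
  have s: "s' < s" using le by (simp add: lower_edge_def)
  have "(v (coeff f i) - v (coeff f s')) * (int s - int s') - (v (coeff f s) - v (coeff f s')) * (int i - int s') \<ge> 0"
    using le c unfolding lower_edge_def by auto
  then have "(int s - int s') * ((v (coeff f i) + int i * v z) - (v (coeff f s') + int s' * v z)) \<ge> 0"
    using edge_line[OF le z, of i] by simp
  moreover have "int s - int s' > 0" using s by simp
  ultimately show ?thesis by (simp add: zero_le_mult_iff)
qed

lemma edge_gt:
  assumes le: "lower_edge v f s' s" and reg: "regular v p f"
    and z: "(int s - int s') * v z = v (coeff f s') - v (coeff f s)"
    and c: "coeff f i \<noteq> 0" and i: "i \<noteq> s'" "i \<noteq> s"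
  shows "v (coeff f i) + int i * v z > v (coeff f s') + int s' * v z"
proof (rule ccontr)
  assume "\<not> ?thesis"
  then have eq: "v (coeff f i) + int i * v z = v (coeff f s') + int s' * v z"
    using edge_ge[OF le z c] by simp
  have on: "(v (coeff f i) - v (coeff f s')) * (int s - int s') = (v (coeff f s) - v (coeff f s')) * (int i - int s')"
    using edge_line[OF le z, of i] eq by simp
  then have "s' \<le> i \<and> i \<le> s" using le c unfolding lower_edge_def by blast
  then have "s' < i \<and> i < s" using i by auto
  then show False using reg le c on unfolding regular_def by blast
qed

end

context dval begin

lemma edge_count:
  assumes comp: "valuation_complete v" and pr: "prime p" and pm: "of_nat p \<in> vI v 1"
    and le: "lower_edge v f s' s" and reg: "regular v p f"
  shows "card {x. x \<noteq> 0 \<and> poly f x = 0 \<and> int (s - s') * v x = v (coeff f s') - v (coeff f s)}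
       = card {x. x \<noteq> 0 \<and> poly (lower_binomial f s' s) x = 0}"
proof -
  define a where "a = coeff f s'"
  define b where "b = coeff f s"
  have s: "s' < s" and a0: "a \<noteq> 0" and b0: "b \<noteq> 0"
    using le by (auto simp: lower_edge_def a_def b_def)
  have dI: "int (s - s') = int s - int s'" using s by simp
  have dpos: "int s - int s' > 0" using s by simp
  have nd: "\<not> p dvd (s - s')" using reg le unfolding regular_def by blast
  have pbeta: "poly (lower_binomial f s' s) x = a * x ^ s' + b * x ^ s" for x
    by (simp add: lower_binomial_def poly_monom a_def b_def)
  have broot: "(int s - int s') * v x = v a - v b"
    if x: "x \<noteq> 0" "poly (lower_binomial f s' s) x = 0" for x
  proof -
    have "a * x ^ s' = - (b * x ^ s)" using x(2) pbeta[of x] by (simp add: eq_neg_iff_add_eq_0)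
    then have "v (a * x ^ s') = v (b * x ^ s)" by (simp add: vneg)
    then have "v a + int s' * v x = v b + int s * v x" using vmult vpow a0 b0 x(1) by simp
    then show ?thesis by algebra
  qed
  show ?thesis
  proof (cases "\<exists>z. z \<noteq> 0 \<and> (int s - int s') * v z = v a - v b")
    case False
    have e1: "{x. x \<noteq> 0 \<and> poly f x = 0 \<and> int (s - s') * v x = v (coeff f s') - v (coeff f s)} = {}"
      using False dI by (auto simp: a_def b_def)
    have e2: "{x. x \<noteq> 0 \<and> poly (lower_binomial f s' s) x = 0} = {}"
      using False broot by blast
    show ?thesis unfolding e1 e2 by simp
  next
    case True
    then obtain z where z0: "z \<noteq> 0" and zl: "(int s - int s') * v z = v a - v b" by blast
    have zl': "(int s - int s') * v z = v (coeff f s') - v (coeff f s)" using zl by (simp add: a_def b_def)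
    define K where "K = a * z ^ s'"
    have K0: "K \<noteq> 0" using a0 z0 by (simp add: K_def)
    have vK: "v (inverse K) = - (v a + int s' * v z)"
      using vinv[OF K0] vmult[of a "z ^ s'"] vpow[OF z0] a0 z0 by (simp add: K_def)
    define g where "g = smult (inverse K) (pcompose f [:0, z:])"
    have cg: "coeff g i = inverse K * (z ^ i * coeff f i)" for i
      by (simp add: g_def coeff_pcompose_linear)
    have pg: "poly f (z * u) = K * poly g u" for u
      using K0 by (simp add: g_def poly_pcompose mult.commute)
    define \<alpha> where "\<alpha> = inverse K * (z ^ s * b)"
    define b0 where "b0 = monom 1 s' + monom \<alpha> s"
    have pb: "poly (lower_binomial f s' s) (z * u) = K * poly b0 u" for u
    proof -
      have "K * \<alpha> = z ^ s * b" using K0 by (simp add: \<alpha>_def)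
      then show ?thesis
        by (simp add: pbeta b0_def poly_monom power_mult_distrib K_def algebra_simps)
    qed
    have vcg: "coeff g i \<noteq> 0 \<and> v (coeff g i) = (v (coeff f i) + int i * v z) - (v a + int s' * v z)"
      if c: "coeff f i \<noteq> 0" for i
    proof -
      have "inverse K \<noteq> 0" "z ^ i \<noteq> 0" using K0 z0 by auto
      then show ?thesis using cg[of i] vmult vpow[OF z0] vK c by simp
    qed
    have cgs': "coeff g s' = 1"
    proof -
      have "z ^ s' * coeff f s' = K" by (simp add: K_def a_def mult.commute)
      then show ?thesis using K0 by (simp add: cg)
    qed
    have cgs: "coeff g s = \<alpha>" by (simp add: cg \<alpha>_def b_def)
    have al: "\<alpha> \<noteq> 0" "v \<alpha> = 0"
    proof -
      have "coeff f s \<noteq> 0" using b0 b_def by simp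
      from vcg[OF this] have h: "\<alpha> \<noteq> 0" "v \<alpha> = v b + int s * v z - (v a + int s' * v z)"
        using cgs unfolding b_def by simp_all
      show "\<alpha> \<noteq> 0" by (rule h(1))
      show "v \<alpha> = 0" unfolding h(2) using zl by algebra
    qed
    have gA: "coeff g i \<in> vI v 0" for i
    proof (cases "coeff f i = 0")
      case True then show ?thesis by (simp add: cg)
    next
      case False
      then show ?thesis using vcg[OF False] edge_ge[OF le zl' False] by (simp add: vI_def a_def)
    qed
    have cb0: "coeff b0 i = (if i = s' then 1 else 0) + (if i = s then \<alpha> else 0)" for i
      by (simp add: b0_def)
    have b0A: "coeff b0 i \<in> vI v 0" for i
      unfolding cb0 using vI_1 unit_vI0[OF al] by (auto intro!: vI_add)
    have df: "coeff g i - coeff b0 i \<in> vI v 1" for i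
    proof -
      consider "i = s'" | "i = s" | "i \<noteq> s'" "i \<noteq> s" by blast
      then show ?thesis
      proof cases
        case 1 then show ?thesis using s cgs' by (simp add: cb0)
      next
        case 2 then show ?thesis using s cgs by (simp add: cb0)
      next
        case 3
        show ?thesis
        proof (cases "coeff f i = 0")
          case True then show ?thesis using 3 by (simp add: cb0 cg)
        next
          case False
          then show ?thesis using 3 vcg[OF False] edge_gt[OF le reg zl' False 3]
            by (simp add: cb0 vI_def a_def)
        qed
      qed
    qed
    have gnz: "g \<noteq> 0" using cgs' by auto
    have b0nz: "b0 \<noteq> 0" using cb0[of s'] s by auto
    have du: "of_nat (s - s') \<noteq> (0::'k) \<and> v (of_nat (s - s') :: 'k) = 0"
      using of_nat_unit[OF pr pm nd] .
    have bd: "poly (pderiv b0) y \<noteq> 0 \<and> v (poly (pderiv b0) y) = 0"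
      if "y \<noteq> 0" "v y = 0" "poly b0 y \<in> vI v 1" for y
      using binom_deriv[OF s al conjunct1[OF du] conjunct2[OF du] that[unfolded b0_def]] unfolding b0_def .
    have der2: "poly (pderiv b0) y \<noteq> 0 \<and> v (poly (pderiv b0) y) = 0"
      if "y \<noteq> 0" "v y = 0" "poly b0 y = 0" for y
      using bd[OF that(1,2)] that(3) by simp
    have dfc: "coeff (g - b0) i \<in> vI v 1" for i using df by simp
    have der1: "poly (pderiv g) y \<noteq> 0 \<and> v (poly (pderiv g) y) = 0"
      if y: "y \<noteq> 0" "v y = 0" "poly g y = 0" for y
    proof -
      have yA: "y \<in> vI v 0" using unit_vI0 y by blast
      have "poly (g - b0) y \<in> vI v 1" using poly_vI[OF dfc yA] .
      then have "- poly (g - b0) y \<in> vI v 1" by (rule vI_neg)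
      then have "poly b0 y \<in> vI v 1" using y(3) by simp
      then have u: "poly (pderiv b0) y \<noteq> 0 \<and> v (poly (pderiv b0) y) = 0" using bd y by blast
      have e: "poly (pderiv (g - b0)) y \<in> vI v 1" using poly_vI[OF pderiv_vI[OF dfc] yA] .
      have "poly (pderiv b0) y + poly (pderiv (g - b0)) y \<noteq> 0 \<and> v (poly (pderiv b0) y + poly (pderiv (g - b0)) y) = 0"
        by (rule unit_add_small[OF conjunct1[OF u] conjunct2[OF u] e])
      then show ?thesis by (simp add: pderiv_diff)
    qed
    have ceq: "card (U g) = card (U b0)"
      by (rule count_eq[OF comp gA b0A df gnz b0nz der1 der2])
    have c1: "card {x. x \<noteq> 0 \<and> poly f x = 0 \<and> v x = v z} = card (U g)"
      by (rule transfer_card[OF z0 K0 pg])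
    have c2: "card {x. x \<noteq> 0 \<and> poly (lower_binomial f s' s) x = 0 \<and> v x = v z} = card (U b0)"
      by (rule transfer_card[OF z0 K0 pb])
    have vx: "(int s - int s') * v x = (int s - int s') * v z \<longleftrightarrow> v x = v z" for x
      using dpos by simp
    have s1: "{x. x \<noteq> 0 \<and> poly f x = 0 \<and> int (s - s') * v x = v (coeff f s') - v (coeff f s)}
        = {x. x \<noteq> 0 \<and> poly f x = 0 \<and> v x = v z}"
      using vx zl' dI by auto
    have s2: "{x. x \<noteq> 0 \<and> poly (lower_binomial f s' s) x = 0}
        = {x. x \<noteq> 0 \<and> poly (lower_binomial f s' s) x = 0 \<and> v x = v z}"
      using broot vx zl by auto
    show ?thesis unfolding s1 s2 c1 c2 ceq ..
  qed
qed

end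

context dval begin

lemma sum_unique_min:
  assumes "finite S" "j \<in> S" "t j \<noteq> 0" "\<And>i. i \<in> S \<Longrightarrow> i \<noteq> j \<Longrightarrow> t i \<in> vI v (v (t j) + 1)"
  shows "sum t S \<noteq> 0"
proof -
  have "sum t S = t j + sum t (S - {j})" using sum.remove[OF assms(1,2)] .
  moreover have "sum t (S - {j}) \<in> vI v (v (t j) + 1)" by (rule vI_sum) (use assms(4) in auto)
  ultimately show ?thesis using v_add_small[OF assms(3), of "v (t j) + 1"] by simp
qed

lemma edge_on:
  assumes le: "lower_edge v f s' s" and z: "(int s - int s') * v z = v (coeff f s') - v (coeff f s)"
    and c: "coeff f i \<noteq> 0" and eq: "v (coeff f i) + int i * v z = v (coeff f s') + int s' * v z"
  shows "s' \<le> i \<and> i \<le> s"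
proof -
  have "(v (coeff f i) - v (coeff f s')) * (int s - int s') = (v (coeff f s) - v (coeff f s')) * (int i - int s')"
    using edge_line[OF le z, of i] eq by simp
  then show ?thesis using le c unfolding lower_edge_def by blast
qed

lemma edge_ws:
  assumes z: "(int s - int s') * v z = v (coeff f s') - v (coeff f s)"
  shows "v (coeff f s) + int s * v z = v (coeff f s') + int s' * v z"
  using z by algebra

lemma edges_disjoint:
  assumes e1: "lower_edge v f s1' s1" and e2: "lower_edge v f s2' s2"
    and z1: "(int s1 - int s1') * v x = v (coeff f s1') - v (coeff f s1)"
    and z2: "(int s2 - int s2') * v x = v (coeff f s2') - v (coeff f s2)"
  shows "s1' = s2' \<and> s1 = s2"
proof -
  define w where "w i = v (coeff f i) + int i * v x" for i
  have c1: "coeff f s1' \<noteq> 0" "coeff f s1 \<noteq> 0" using e1 by (auto simp: lower_edge_def)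
  have c2: "coeff f s2' \<noteq> 0" "coeff f s2 \<noteq> 0" using e2 by (auto simp: lower_edge_def)
  have g1: "w s2' \<ge> w s1'" using edge_ge[OF e1 z1 c2(1)] by (simp add: w_def)
  have g2: "w s1' \<ge> w s2'" using edge_ge[OF e2 z2 c1(1)] by (simp add: w_def)
  have eq: "w s1' = w s2'" using g1 g2 by simp
  have ws1: "w s1 = w s1'" using edge_ws[OF z1] by (simp add: w_def)
  have ws2: "w s2 = w s2'" using edge_ws[OF z2] by (simp add: w_def)
  have "s1' \<le> s2' \<and> s2' \<le> s1" using edge_on[OF e1 z1 c2(1)] eq by (simp add: w_def)
  moreover have "s2' \<le> s1' \<and> s1' \<le> s2" using edge_on[OF e2 z2 c1(1)] eq by (simp add: w_def)
  moreover have "s2 \<le> s1" using edge_on[OF e1 z1 c2(2)] eq ws2 by (simp add: w_def)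
  moreover have "s1 \<le> s2" using edge_on[OF e2 z2 c1(2)] eq ws1 by (simp add: w_def)
  ultimately show ?thesis by simp
qed

lemma root_edge:
  assumes f: "f \<noteq> 0" and x: "x \<noteq> 0" "poly f x = 0"
  shows "\<exists>s' s. lower_edge v f s' s \<and> int (s - s') * v x = v (coeff f s') - v (coeff f s)"
proof -
  define w where "w i = v (coeff f i) + int i * v x" for i
  define Sp where "Sp = {i. coeff f i \<noteq> 0}"
  have finSp: "finite Sp" unfolding Sp_def
    by (rule finite_subset[of _ "{..degree f}"]) (auto intro: le_degree)
  have neSp: "Sp \<noteq> {}" using f unfolding Sp_def by (auto simp: poly_eq_iff)
  define m where "m = Min (w ` Sp)"
  have mle: "i \<in> Sp \<Longrightarrow> m \<le> w i" for i unfolding m_def using finSp by auto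
  have min_in: "m \<in> w ` Sp" unfolding m_def using finSp neSp by auto
  define Ms where "Ms = {i \<in> Sp. w i = m}"
  have finMs: "finite Ms" using finSp by (simp add: Ms_def)
  have neMs: "Ms \<noteq> {}" using min_in by (auto simp: Ms_def)
  define s' where "s' = Min Ms"
  define s where "s = Max Ms"
  have s'M: "s' \<in> Ms" and sM: "s \<in> Ms" using finMs neMs by (auto simp: s'_def s_def)
  have bnds: "i \<in> Ms \<Longrightarrow> s' \<le> i \<and> i \<le> s" for i using finMs by (auto simp: s'_def s_def)
  have cs': "coeff f s' \<noteq> 0" "w s' = m" and cs: "coeff f s \<noteq> 0" "w s = m"
    using s'M sM by (auto simp: Ms_def Sp_def)
  have lt: "s' < s"
  proof (rule ccontr)
    assume "\<not> s' < s"
    then have ss: "s = s'" using bnds[OF s'M] by simp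
    define t where "t i = coeff f i * x ^ i" for i
    have vt: "coeff f i \<noteq> 0 \<Longrightarrow> t i \<noteq> 0 \<and> v (t i) = w i" for i
      using vmult[of "coeff f i" "x ^ i"] vpow[OF x(1)] x(1) by (simp add: t_def w_def)
    have "sum t {..degree f} \<noteq> 0"
    proof (rule sum_unique_min)
      show "s' \<in> {..degree f}" using cs'(1) by (simp add: le_degree)
      show "t s' \<noteq> 0" using vt[OF cs'(1)] by simp
      fix i assume i: "i \<in> {..degree f}" "i \<noteq> s'"
      show "t i \<in> vI v (v (t s') + 1)"
      proof (cases "coeff f i = 0")
        case True then show ?thesis by (simp add: t_def)
      next
        case False
        have "i \<notin> Ms" using bnds i(2) ss by force
        then have "w i > m" using mle[of i] False by (force simp: Ms_def Sp_def)
        then show ?thesis using vt[OF False] vt[OF cs'(1)] cs'(2) by (simp add: vI_def)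
      qed
    qed simp
    then show False using x(2) by (simp add: poly_altdef t_def)
  qed
  have zl: "(int s - int s') * v x = v (coeff f s') - v (coeff f s)"
    using cs'(2) cs(2) unfolding w_def left_diff_distrib by linarith
  have id: "(v (coeff f i) - v (coeff f s')) * (int s - int s') - (v (coeff f s) - v (coeff f s')) * (int i - int s')
     = (int s - int s') * (w i - w s')" for i
    using zl unfolding w_def by algebra
  have dpos: "int s - int s' > 0" using lt by simp
  have "lower_edge v f s' s"
    unfolding lower_edge_def
  proof (intro conjI allI impI)
    show "s' < s" "coeff f s' \<noteq> 0" "coeff f s \<noteq> 0" using lt cs' cs by auto
  next
    fix i assume c: "coeff f i \<noteq> 0"
    then have "w i - w s' \<ge> 0" using mle[of i] cs'(2) by (simp add: Sp_def)
    then have "(int s - int s') * (w i - w s') \<ge> 0" using dpos by simp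
    then show "(v (coeff f i) - v (coeff f s')) * (int s - int s') \<ge> (v (coeff f s) - v (coeff f s')) * (int i - int s')"
      using id[of i] by simp
  next
    fix i assume c: "coeff f i \<noteq> 0"
      and e: "(v (coeff f i) - v (coeff f s')) * (int s - int s') = (v (coeff f s) - v (coeff f s')) * (int i - int s')"
    then have "(int s - int s') * (w i - w s') = 0" using id[of i] by simp
    then have "w i = m" using dpos cs'(2) by simp
    then have "i \<in> Ms" using c by (simp add: Ms_def Sp_def)
    then show "s' \<le> i" "i \<le> s" using bnds by auto
  qed
  moreover have "int (s - s') * v x = v (coeff f s') - v (coeff f s)" using zl lt by simp
  ultimately show ?thesis by blast
qed

end

theorem theorem4p6:
  fixes v :: "'k::field \<Rightarrow> int" and p q :: nat and f :: "'k poly"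
  assumes "discrete_valuation v"
    and "valuation_complete v"
    and "finite (residue_field v)" and "card (residue_field v) = q"
    and "prime p" and "of_nat p \<in> max_ideal v"
    and "f \<noteq> 0"
    and "regular v p f"
  shows "card {x. x \<noteq> 0 \<and> poly f x = 0} =
    (\<Sum>(s', s)\<in>{(s', s). lower_edge v f s' s}.
        card {x. x \<noteq> 0 \<and> poly (lower_binomial f s' s) x = 0})"
proof -
  interpret dval v by (rule dval.intro) (rule assms(1))
  have pm: "of_nat p \<in> vI v 1" using assms(6) by (simp add: max_ideal_def vI_def)
  define E where "E = {(s', s). lower_edge v f s' s}"
  define Z where "Z = (\<lambda>(s', s). {x. x \<noteq> 0 \<and> poly f x = 0 \<and> int (s - s') * v x = v (coeff f s') - v (coeff f s)})"
  have finE: "finite E"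
  proof (rule finite_subset[of _ "{..degree f} \<times> {..degree f}"])
    show "E \<subseteq> {..degree f} \<times> {..degree f}"
      by (auto simp: E_def lower_edge_def intro: le_degree)
  qed simp
  have finZ: "finite (Z e)" for e
  proof -
    have "Z e \<subseteq> {x. poly f x = 0}" by (auto simp: Z_def split: prod.splits)
    then show ?thesis using poly_roots_finite[OF assms(7)] by (rule finite_subset)
  qed
  have disj: "\<forall>e1\<in>E. \<forall>e2\<in>E. e1 \<noteq> e2 \<longrightarrow> Z e1 \<inter> Z e2 = {}"
  proof (intro ballI impI)
    fix e1 e2 assume e: "e1 \<in> E" "e2 \<in> E" "e1 \<noteq> e2"
    obtain s1' s1 where p1: "e1 = (s1', s1)" by (cases e1)
    obtain s2' s2 where p2: "e2 = (s2', s2)" by (cases e2)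
    have l1: "lower_edge v f s1' s1" and l2: "lower_edge v f s2' s2" using e p1 p2 by (auto simp: E_def)
    have lt1: "s1' < s1" and lt2: "s2' < s2" using l1 l2 by (auto simp: lower_edge_def)
    show "Z e1 \<inter> Z e2 = {}"
    proof (rule ccontr)
      assume "Z e1 \<inter> Z e2 \<noteq> {}"
      then obtain x where "x \<in> Z e1" "x \<in> Z e2" by blast
      then have z1: "(int s1 - int s1') * v x = v (coeff f s1') - v (coeff f s1)"
        and z2: "(int s2 - int s2') * v x = v (coeff f s2') - v (coeff f s2)"
        using lt1 lt2 by (auto simp: Z_def p1 p2 of_nat_diff)
      show False using edges_disjoint[OF l1 l2 z1 z2] e(3) p1 p2 by simp
    qed
  qed
  have cover: "{x. x \<noteq> 0 \<and> poly f x = 0} = (\<Union>e\<in>E. Z e)"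
  proof (rule set_eqI, rule iffI)
    fix x assume "x \<in> {x. x \<noteq> 0 \<and> poly f x = 0}"
    then have x: "x \<noteq> 0" "poly f x = 0" by auto
    obtain s' s where "lower_edge v f s' s" "int (s - s') * v x = v (coeff f s') - v (coeff f s)"
      using root_edge[OF assms(7) x] by blast
    then show "x \<in> (\<Union>e\<in>E. Z e)" using x by (auto simp: E_def Z_def)
  next
    fix x assume "x \<in> (\<Union>e\<in>E. Z e)"
    then show "x \<in> {x. x \<noteq> 0 \<and> poly f x = 0}" by (auto simp: Z_def split: prod.splits)
  qed
  have "card {x. x \<noteq> 0 \<and> poly f x = 0} = (\<Sum>e\<in>E. card (Z e))"
    unfolding cover by (rule card_UN_disjoint[OF finE]) (use finZ disj in auto)
  also have "\<dots> = (\<Sum>(s', s)\<in>E. card {x. x \<noteq> 0 \<and> poly (lower_binomial f s' s) x = 0})"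
  proof (rule sum.cong)
    fix e assume "e \<in> E"
    then obtain s' s where e: "e = (s', s)" "lower_edge v f s' s" by (auto simp: E_def)
    show "card (Z e) = (case e of (s', s) \<Rightarrow> card {x. x \<noteq> 0 \<and> poly (lower_binomial f s' s) x = 0})"
      using edge_count[OF assms(2) assms(5) pm e(2) assms(8)] by (simp add: e(1) Z_def)
  qed simp
  finally show ?thesis by (simp add: E_def)
qed

end
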